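(* Fix $\theta\in\mathbb{R}$ and a value $r\in\{0,1\}$ of the encryption randomness, and let $\mathcal{E}(\rho)=\mathcal{H}^\theta_r\rho(\mathcal{H}^\theta_r)^\dagger$ be the superoperator applied by $\Xi$ to the message qubit. For $t\in[0,1]$, the scheme $\Xi$ is $(t,\tfrac{1}{2}(2^{1-t}-1))$-indistinguishable on classical message states: for every density operator $\rho=\gamma_0\lvert 0\rangle\langle 0\rvert+\gamma_1\lvert 1\rangle\langle 1\rvert$ with $H_\infty(\rho)\ge t$, $$\Big\lVert \mathcal{E}(\rho)-\tfrac{1}{2}\mathbb{I}\Big\rVert_{tr}\le \tfrac{1}{2}(2^{1-t}-1).$$
   Context: For $\theta\in\mathbb{R}$ and $u\in\{0,1\}$, $\mathcal{H}^\theta_u=\frac{1}{\sqrt{2}}\begin{bmatrix}1 & 1\\ (-1)^u e^{i\theta} & (-1)^{u+1}e^{i\theta}\end{bmatrix}$. The scheme $\Xi$ encrypts a classical message bit $b$ under secret bit $s$ and angle $\theta$ by sampling a uniformly random bit $r$ and outputting $(\mathcal{H}^\theta_r\lvert s\rangle,\mathcal{H}^\theta_r\lvert b\rangle)$; the message qubit is thus transformed by $\mathcal{H}^\theta_r$. $H_\infty(\rho)=-\log_2\max\{\gamma_0,\gamma_1\}$ is the min-entropy, $\lVert X\rVert_{tr}=\frac{1}{2}\mathrm{Tr}\sqrt{X^\dagger X}$ is the trace distance norm, and $\mathbb{I}$ is the $2\times 2$ identity. (An encryption superoperator $\mathcal{E}$ is $(t,\epsilon)$-indistinguishable if $\lVert\mathcal{E}(\rho)-\frac{1}{d}\mathbb{I}\rVert_{tr}\le\epsilon$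 for all $\rho$ with $H_\infty(\rho)\ge t$, where $d$ is the message-space dimension, here $d=2$.) *)

theory Defs
  imports "HOL-Analysis.Analysis"
begin

text \<open>2x2 complex matrices are represented as complex^2^2 (rows indexed by 1,2).\<close>

definition adj :: "complex^2^2 \<Rightarrow> complex^2^2" where
  "adj A = (\<chi> i j. cnj (A $ j $ i))"

definition ctrace :: "complex^2^2 \<Rightarrow> complex" where
  "ctrace A = (\<Sum>i\<in>UNIV. A $ i $ i)"

definition hermitian2 :: "complex^2^2 \<Rightarrow> bool" where
  "hermitian2 A \<longleftrightarrow> adj A = A"

definition psd2 :: "complex^2^2 \<Rightarrow> bool" where
  "psd2 A \<longleftrightarrow> hermitian2 A \<and>
     (\<forall>v::complex^2. 0 \<le> Re (\<Sum>i\<in>UNIV. cnj (v $ i) * (A *v v) $ i))"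

definition msqrt :: "complex^2^2 \<Rightarrow> complex^2^2" where
  "msqrt A = (THE B. psd2 B \<and> B ** B = A)"

definition tr_norm :: "complex^2^2 \<Rightarrow> real" where
  "tr_norm X = (1/2) * Re (ctrace (msqrt (adj X ** X)))"

definition Hmat :: "real \<Rightarrow> nat \<Rightarrow> complex^2^2" where
  "Hmat \<theta> u = (let c = 1 / complex_of_real (sqrt 2); e = exp (\<i> * complex_of_real \<theta>) in
     vector [vector [c * 1, c * 1],
             vector [c * ((-1) ^ u * e), c * ((-1) ^ (u + 1) * e)]])"

definition Enc :: "real \<Rightarrow> nat \<Rightarrow> complex^2^2 \<Rightarrow> complex^2^2" where
  "Enc \<theta> r \<rho> = Hmat \<theta> r ** \<rho> ** adj (Hmat \<theta> r)"

definition diag_state :: "real \<Rightarrow> real \<Rightarrow> complex^2^2" where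
  "diag_state g0 g1 = vector [vector [complex_of_real g0, 0], vector [0, complex_of_real g1]]"

definition min_entropy :: "real \<Rightarrow> real \<Rightarrow> real" where
  "min_entropy g0 g1 = - log 2 (max g0 g1)"

end

theory Submission
  imports Defs
begin

lemma alg: "(a::complex) * b = 1 \<Longrightarrow> c * c = 1 \<Longrightarrow> c * a * x * (c * b) + c * a * (1 - x) * (c * b) = 1"
proof -
  assume h: "a * b = 1" "c * c = 1"
  have "c * a * x * (c * b) + c * a * (1 - x) * (c * b) = (c*c)*(a*b)" by algebra
  thus ?thesis using h by simp
qed

lemma X: assumes "g0+g1=1"
  shows "Enc \<theta> r (diag_state g0 g1) - mat (1/2) =
   vector [vector [0, (-1)^r * cnj (exp (\<i> * complex_of_real \<theta>)) * complex_of_real (g0 - 1/2)],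
           vector [(-1)^r * exp (\<i> * complex_of_real \<theta>) * complex_of_real (g0 - 1/2), 0]]"
proof -
  have s2: "complex_of_real (sqrt 2) * complex_of_real (sqrt 2) = 2"
    by (simp flip: of_real_mult)
  have e: "exp (\<i> * complex_of_real \<theta>) * cnj (exp (\<i> * complex_of_real \<theta>)) = 1"
    by (simp add: exp_cnj flip: exp_add)
  have m: "(-1::complex)^r * (-1)^r = 1" by (simp flip: power_add)
  have g1: "g1 = 1 - g0" using assms by simp
  show ?thesis
  apply (simp add: vec_eq_iff forall_2 Enc_def Hmat_def diag_state_def adj_def matrix_matrix_mult_def sum_2 mat_def Let_def s2 g1)
    apply (intro conjI)
       apply (simp add: field_simps)
      apply (simp add: field_simps)
     apply (simp add: field_simps)
    by (rule alg[OF e m])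
qed


lemma psd_comp:
  assumes "psd2 B"
  shows "B$1$2 = cnj (B$2$1)" "B$1$1 = complex_of_real (Re (B$1$1))" "B$2$2 = complex_of_real (Re (B$2$2))"
    "Re (B$1$1) \<ge> 0" "Re (B$2$2) \<ge> 0"
    "\<And>v::complex^2. 0 \<le> Re (cnj (v$1) * (B$1$1 * v$1 + B$1$2 * v$2) + cnj (v$2) * (B$2$1 * v$1 + B$2$2 * v$2))"
proof -
  have h: "adj B = B" using assms by (simp add: psd2_def hermitian2_def)
  have q: "\<And>v::complex^2. 0 \<le> Re (\<Sum>i\<in>UNIV. cnj (v $ i) * (B *v v) $ i)" using assms by (simp add: psd2_def)
  have hh: "cnj (B$j$i) = B$i$j" for i j using arg_cong[OF h, of "\<lambda>M. M$i$j"] by (simp add: adj_def)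
  show "B$1$2 = cnj (B$2$1)" using hh[of 2 1] by simp
  show a: "B$1$1 = complex_of_real (Re (B$1$1))" using hh[of 1 1] by (simp add: complex_eq_iff)
  show e: "B$2$2 = complex_of_real (Re (B$2$2))" using hh[of 2 2] by (simp add: complex_eq_iff)
  show f: "\<And>v::complex^2. 0 \<le> Re (cnj (v$1) * (B$1$1 * v$1 + B$1$2 * v$2) + cnj (v$2) * (B$2$1 * v$1 + B$2$2 * v$2))"
    using q by (simp add: sum_2 matrix_vector_mult_def)
  show "Re (B$1$1) \<ge> 0" using f[of "vector [1,0]"] by simp
  show "Re (B$2$2) \<ge> 0" using f[of "vector [0,1]"] by simp
qed

lemma psd_mat: "0 \<le> s \<Longrightarrow> psd2 (mat (complex_of_real s))"
  by (simp add: psd2_def hermitian2_def adj_def mat_def vec_eq_iff forall_2 sum_2 matrix_vector_mult_def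
      mult.assoc[symmetric] mult.commute[of "cnj _"] complex_mult_cnj)
     (intro allI add_nonneg_nonneg; simp add: mult.assoc)

lemma sqrt_unique:
  assumes "psd2 B" "B ** B = mat (complex_of_real s)" "0 \<le> s"
  shows "B = mat (complex_of_real (sqrt s))"
proof -
  note P = psd_comp[OF assms(1)]
  define a where "a = Re (B$1$1)"
  define e where "e = Re (B$2$2)"
  define c where "c = B$2$1"
  have B: "B = vector [vector [complex_of_real a, cnj c], vector [c, complex_of_real e]]"
    using P(1-3) by (simp add: vec_eq_iff forall_2 a_def e_def c_def)
  have a0: "a \<ge> 0" "e \<ge> 0" using P a_def e_def by auto
  have sq: "complex_of_real a * complex_of_real a + cnj c * c = complex_of_real s"
       "complex_of_real a * cnj c + cnj c * complex_of_real e = 0"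
       "c * cnj c + complex_of_real e * complex_of_real e = complex_of_real s"
    using assms(2) unfolding B
    by (simp_all add: vec_eq_iff forall_2 sum_2 matrix_matrix_mult_def mat_def)
  have c0: "c = 0"
  proof (rule ccontr)
    assume "c \<noteq> 0"
    have "cnj c * complex_of_real (a + e) = 0" using sq(2) by (simp add: algebra_simps)
    hence "complex_of_real (a + e) = 0" using \<open>c \<noteq> 0\<close> by simp
    hence "a + e = 0" by (simp only: of_real_eq_0_iff)
    hence "a = 0" "e = 0" using a0 by auto
    have "0 \<le> Re (cnj c * (- c) + cnj (- c) * c)"
    proof -
      have comps: "B$1$1 = 0" "B$1$2 = cnj c" "B$2$1 = c" "B$2$2 = 0"
        by (subst B; simp add: \<open>a = 0\<close> \<open>e = 0\<close>)+
      define v :: "complex^2" where "v = vector [1, - c]"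
      have v: "v$1 = 1" "v$2 = - c" by (simp_all add: v_def)
      have "0 \<le> Re (cnj (v$1) * (B$1$1 * v$1 + B$1$2 * v$2) + cnj (v$2) * (B$2$1 * v$1 + B$2$2 * v$2))" by (rule P(6))
      thus ?thesis unfolding comps v by simp
    qed
    hence "Re c ^ 2 + Im c ^ 2 \<le> 0" by (simp add: power2_eq_square)
    hence "Re c ^ 2 = 0 \<and> Im c ^ 2 = 0" using zero_le_power2[of "Re c"] zero_le_power2[of "Im c"] by linarith
    hence "Re c = 0 \<and> Im c = 0" by simp
    thus False using \<open>c \<noteq> 0\<close> by (simp add: complex_eq_iff)
  qed
  have "complex_of_real (a*a) = complex_of_real s" using sq(1) c0 by simp
  hence "a*a = s" by (simp only: of_real_eq_iff)
  hence "a = sqrt s" using a0 by auto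
  moreover have "complex_of_real (e*e) = complex_of_real s" using sq(3) c0 by simp
  hence "e*e = s" by (simp only: of_real_eq_iff)
  hence "e = sqrt s" using a0 by auto
  ultimately show ?thesis using c0 B by (simp add: vec_eq_iff forall_2 mat_def)
qed



lemma mat_mult_mat: "(mat (x::complex) :: complex^2^2) ** (mat y :: complex^2^2) = (mat (x*y) :: complex^2^2)"
  by (simp add: vec_eq_iff forall_2 sum_2 mat_def matrix_matrix_mult_def)

lemma msqrt_mat: "0 \<le> s \<Longrightarrow> msqrt (mat (complex_of_real s)) = mat (complex_of_real (sqrt s))"
  unfolding msqrt_def
proof (rule the_equality)
  assume s: "0 \<le> s"
  show "psd2 (mat (complex_of_real (sqrt s))) \<and> (mat (complex_of_real (sqrt s)) :: complex^2^2) ** mat (complex_of_real (sqrt s)) = mat (complex_of_real s)"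
  proof -
    have "complex_of_real (sqrt s) * complex_of_real (sqrt s) = complex_of_real s"
      using s by (simp flip: of_real_mult)
    moreover have "psd2 (mat (complex_of_real (sqrt s)))" using s by (simp add: psd_mat)
    moreover have "(mat (complex_of_real (sqrt s)) :: complex^2^2) ** mat (complex_of_real (sqrt s)) = mat (complex_of_real (sqrt s) * complex_of_real (sqrt s))"
      by (rule mat_mult_mat)
    ultimately show ?thesis by simp
  qed
  fix B assume "psd2 B \<and> B ** B = mat (complex_of_real s)"
  thus "B = mat (complex_of_real (sqrt s))" using sqrt_unique[of B s] s by blast
qed

lemma adjX: "adj (vector [vector [0, cnj w], vector [w, 0]]) ** vector [vector [0, cnj w], vector [w, 0]]
   = (mat (complex_of_real (cmod w ^ 2)) :: complex^2^2)"
proof -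
  have h: "w * cnj w = complex_of_real (cmod w)^2" using complex_norm_square[of w] by simp
  hence h2: "cnj w * w = complex_of_real (cmod w)^2" by (simp add: mult.commute)
  show ?thesis using h h2 by (simp add: vec_eq_iff forall_2 sum_2 mat_def matrix_matrix_mult_def adj_def)
qed

lemma ctrace_mat: "ctrace (mat x :: complex^2^2) = 2 * x"
  by (simp add: ctrace_def sum_2 mat_def)

theorem theorem3:
  fixes \<theta> t g0 g1 :: real and r :: nat
  assumes "r \<in> {0, 1}"
    and "0 \<le> t" and "t \<le> 1"
    and "0 \<le> g0" and "0 \<le> g1" and "g0 + g1 = 1"
    and "min_entropy g0 g1 \<ge> t"
  shows "tr_norm (Enc \<theta> r (diag_state g0 g1) - mat (1/2)) \<le> (1/2) * (2 powr (1 - t) - 1)"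
proof -
  define w where "w = (-1)^r * exp (\<i> * complex_of_real \<theta>) * complex_of_real (g0 - 1/2)"
  have cw: "(-1)^r * cnj (exp (\<i> * complex_of_real \<theta>)) * complex_of_real (g0 - 1/2) = cnj w"
    by (simp add: w_def)
  have nw: "cmod w = \<bar>g0 - 1/2\<bar>"
    by (simp add: w_def norm_mult norm_power del: of_real_diff of_real_divide)
  have tn: "tr_norm (Enc \<theta> r (diag_state g0 g1) - mat (1/2)) = \<bar>g0 - 1/2\<bar>"
    unfolding X[OF assms(6)] cw w_def[symmetric] tr_norm_def adjX msqrt_mat[OF zero_le_power2] ctrace_mat
    using nw by simp
  define m where "m = max g0 g1"
  have m0: "m \<ge> 1/2" using assms(6) m_def by linarith
  have "log 2 m \<le> - t" using assms(7) by (simp add: min_entropy_def m_def)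
  have "m = 2 powr (log 2 m)" using m0 by simp
  also have "\<dots> \<le> 2 powr (- t)" by (rule powr_mono) (use \<open>log 2 m \<le> - t\<close> in auto)
  finally have "m \<le> 2 powr (- t)" .
  moreover have "\<bar>g0 - 1/2\<bar> = m - 1/2" using assms(6) m_def by auto
  moreover have "2 powr (1 - t) = 2 * 2 powr (- t)" by (simp add: powr_diff powr_minus divide_inverse)
  ultimately show ?thesis using tn by simp
qed
end
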